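(* Let $\mathcal{X},\mathcal{Y}$ be finite sets and $\mu\ge0$. The map $P_{XY}\mapsto R_\mu(P_{XY})$, defined on the set of probability distributions on $\mathcal{X}\times\mathcal{Y}$, is continuous.
   Context: For a distribution $P_{XY}$ on $\mathcal{X}\times\mathcal{Y}$, $\mathcal{R}^*_{\mathtt{WAK}}(P_{XY})$ is the set of pairs $(r_0,r_2)$ for which there exists a conditional distribution $P_{W|XY}$ with finite $\mathcal{W}$, $|\mathcal{W}|\le|\mathcal{X}||\mathcal{Y}|+2$, such that, for $(W,X,Y)\sim P_{XY}P_{W|XY}$, $r_0\ge I(W\wedge X,Y)$, $r_2\ge H(Y\mid W)$ and $I(W\wedge Y\mid X)=0$ (equivalently, $W$ may be taken to depend on $(X,Y)$ only through $X$, with $r_0\ge I(W\wedge X)$). For $\mu\ge0$, $R_\mu(P_{XY}):=\min\{r_0+\mu r_2:(r_0,r_2)\in\mathcal{R}^*_{\mathtt{WAK}}(P_{XY})\}$. Continuity is with respect to the $\ell_1$ (total variation) distance on distributions. *)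

theory Defs
  imports Complex_Main
begin

definition is_dist :: "('a::finite \<Rightarrow> real) \<Rightarrow> bool" where
  "is_dist P \<longleftrightarrow> (\<forall>a. 0 \<le> P a) \<and> (\<Sum>a\<in>UNIV. P a) = 1"

definition eta :: "real \<Rightarrow> real" where
  "eta t = (if t = 0 then 0 else - t * log 2 t)"

definition ent :: "'a set \<Rightarrow> ('a \<Rightarrow> real) \<Rightarrow> real" where
  "ent A p = (\<Sum>a\<in>A. eta (p a))"

text \<open>Auxiliary alphabet W = {0..<wak_card} with the cardinality bound |X||Y|+2.
  Any finite W with |W| \<le> |X||Y|+2 can be embedded in this set (unused letters
  get conditional probability 0).\<close>

definition wak_card :: "('x::finite \<times> 'y::finite) itself \<Rightarrow> nat" where
  "wak_card (t :: ('x \<times> 'y) itself) = card (UNIV :: 'x set) * card (UNIV :: 'y set) + 2"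

definition cond_dist :: "nat \<Rightarrow> (nat \<Rightarrow> 'x \<times> 'y \<Rightarrow> real) \<Rightarrow> bool" where
  "cond_dist K V \<longleftrightarrow> (\<forall>w xy. 0 \<le> V w xy) \<and> (\<forall>xy. (\<Sum>w<K. V w xy) = 1)"

definition jW :: "('x::finite \<times> 'y::finite \<Rightarrow> real) \<Rightarrow> (nat \<Rightarrow> 'x \<times> 'y \<Rightarrow> real) \<Rightarrow> nat \<Rightarrow> real" where
  "jW P V w = (\<Sum>xy\<in>UNIV. P xy * V w xy)"

definition jWX :: "('x::finite \<times> 'y::finite \<Rightarrow> real) \<Rightarrow> (nat \<Rightarrow> 'x \<times> 'y \<Rightarrow> real) \<Rightarrow> nat \<times> 'x \<Rightarrow> real" where
  "jWX P V wx = (\<Sum>y\<in>UNIV. P (snd wx, y) * V (fst wx) (snd wx, y))"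

definition jWY :: "('x::finite \<times> 'y::finite \<Rightarrow> real) \<Rightarrow> (nat \<Rightarrow> 'x \<times> 'y \<Rightarrow> real) \<Rightarrow> nat \<times> 'y \<Rightarrow> real" where
  "jWY P V wy = (\<Sum>x\<in>UNIV. P (x, snd wy) * V (fst wy) (x, snd wy))"

definition jWXY :: "('x::finite \<times> 'y::finite \<Rightarrow> real) \<Rightarrow> (nat \<Rightarrow> 'x \<times> 'y \<Rightarrow> real) \<Rightarrow> nat \<times> ('x \<times> 'y) \<Rightarrow> real" where
  "jWXY P V wxy = P (snd wxy) * V (fst wxy) (snd wxy)"

definition mX :: "('x::finite \<times> 'y::finite \<Rightarrow> real) \<Rightarrow> 'x \<Rightarrow> real" where
  "mX P x = (\<Sum>y\<in>UNIV. P (x, y))"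

definition H_W where "H_W K P V = ent {..<K} (jW P V)"
definition H_WX where "H_WX K P V = ent ({..<K} \<times> UNIV) (jWX P V)"
definition H_WY where "H_WY K P V = ent ({..<K} \<times> UNIV) (jWY P V)"
definition H_WXY where "H_WXY K P V = ent ({..<K} \<times> UNIV) (jWXY P V)"
definition H_XY where "H_XY (P :: 'x::finite \<times> 'y::finite \<Rightarrow> real) = ent UNIV P"
definition H_X where "H_X (P :: 'x::finite \<times> 'y::finite \<Rightarrow> real) = ent UNIV (mX P)"

definition MI_W_XY where "MI_W_XY K P V = H_W K P V + H_XY P - H_WXY K P V"

definition CH_Y_W where "CH_Y_W K P V = H_WY K P V - H_W K P V"

definition CMI_W_Y_X where "CMI_W_Y_X K P V = H_WX K P V + H_XY P - H_WXY K P V - H_X P"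

definition WAK_region :: "('x::finite \<times> 'y::finite \<Rightarrow> real) \<Rightarrow> (real \<times> real) set" where
  "WAK_region P = {(r0, r2). \<exists>V. cond_dist (wak_card TYPE('x \<times> 'y)) V \<and>
       r0 \<ge> MI_W_XY (wak_card TYPE('x \<times> 'y)) P V \<and>
       r2 \<ge> CH_Y_W (wak_card TYPE('x \<times> 'y)) P V \<and>
       CMI_W_Y_X (wak_card TYPE('x \<times> 'y)) P V = 0}"

text \<open>R_mu(P) = min {r0 + mu r2 : (r0,r2) in region}; the minimum is attained, written as Inf.\<close>
definition R_mu :: "real \<Rightarrow> ('x::finite \<times> 'y::finite \<Rightarrow> real) \<Rightarrow> real" where
  "R_mu mu P = Inf {r0 + mu * r2 | r0 r2. (r0, r2) \<in> WAK_region P}"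

end

theory Submission
  imports Defs "HOL-Analysis.Analysis"
begin
lemma eta_alt: "eta t = - (t * ln t) / ln 2"
  by (simp add: eta_def log_def)
lemma xlnx_lim: "((\<lambda>t::real. t * ln t) \<longlongrightarrow> 0) (at_right 0)"
proof -
  have "((\<lambda>u::real. - (ln u / u)) \<longlongrightarrow> 0) at_top"
    using tendsto_minus[OF ln_x_over_x_tendsto_0] by simp
  moreover have "eventually (\<lambda>u::real. - (ln u / u) = inverse u * ln (inverse u)) at_top"
    unfolding eventually_at_top_linorder
    by (rule exI[of _ 1]) (simp add: ln_inverse divide_inverse)
  ultimately have "((\<lambda>u::real. inverse u * ln (inverse u)) \<longlongrightarrow> 0) at_top"
    by (rule Lim_transform_eventually)
  then show ?thesis
    using filterlim_at_right_to_top[where F="nhds 0" and f="\<lambda>t. t * ln t"] by simp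
qed
lemma cont_xlnx: "continuous_on {0..1} (\<lambda>t::real. t * ln t)"
proof (clarsimp simp: continuous_on_eq_continuous_within)
  fix x :: real assume x: "0 \<le> x" "x \<le> 1"
  show "continuous (at x within {0..1}) (\<lambda>t. t * ln t)"
  proof (cases "x = 0")
    case True
    have "((\<lambda>t::real. t * ln t) \<longlongrightarrow> 0) (at 0 within {0..1})"
    proof -
      have "((\<lambda>t::real. t * ln t) \<longlongrightarrow> 0) (at 0 within {0<..})"
        using xlnx_lim by simp
      then have "((\<lambda>t::real. t * ln t) \<longlongrightarrow> 0) (at 0 within {0<..1})"
        by (rule tendsto_within_subset) auto
      moreover have "at (0::real) within {0..1} = at 0 within {0<..1}"
        by (rule at_within_nhd[where S=UNIV]) auto
      ultimately show ?thesis by simp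
    qed
    then show ?thesis using True by (simp add: continuous_within)
  next
    case False
    then have "x > 0" using x by simp
    then show ?thesis
      by (intro continuous_intros) auto
  qed
qed
lemma eta_uc: "uniformly_continuous_on {0..1} eta"
proof -
  have "continuous_on {0..1} eta"
    unfolding eta_alt
    by (intro continuous_intros cont_xlnx) auto
  then show ?thesis by (simp add: compact_uniformly_continuous)
qed
lemma eta_uc': "e > 0 \<Longrightarrow> \<exists>d>0. \<forall>s\<in>{0..1}. \<forall>t\<in>{0..1}. \<bar>s - t\<bar> < d \<longrightarrow> \<bar>eta s - eta t\<bar> < e"
  using eta_uc unfolding uniformly_continuous_on_def dist_real_def by metis

lemma eta_log: "eta t = - t * log 2 t"
  by (simp add: eta_def)

lemma sum_pair: "(\<Sum>xy\<in>UNIV. g xy) = (\<Sum>x\<in>(UNIV::'x::finite set). \<Sum>y\<in>(UNIV::'y::finite set). g (x,y))"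
  by (simp add: sum.cartesian_product UNIV_Times_UNIV)

lemma ent_prod: "finite A \<Longrightarrow> finite B \<Longrightarrow> ent (A \<times> B) p = (\<Sum>a\<in>A. \<Sum>b\<in>B. eta (p (a,b)))"
  by (simp add: ent_def sum.cartesian_product)

lemma swap3: "(\<Sum>x\<in>A. \<Sum>y\<in>B. \<Sum>w\<in>C. f w x y) = (\<Sum>w\<in>C. \<Sum>x\<in>A. \<Sum>y\<in>B. f w x y)"
proof -
  have "(\<Sum>x\<in>A. \<Sum>y\<in>B. \<Sum>w\<in>C. f w x y) = (\<Sum>x\<in>A. \<Sum>w\<in>C. \<Sum>y\<in>B. f w x y)"
    by (rule sum.cong[OF refl], rule sum.swap)
  also have "\<dots> = (\<Sum>w\<in>C. \<Sum>x\<in>A. \<Sum>y\<in>B. f w x y)" by (rule sum.swap)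
  finally show ?thesis .
qed

lemma CMI_formula:
  fixes P :: "'x::finite \<times> 'y::finite \<Rightarrow> real"
  assumes V: "\<And>xy. (\<Sum>w<K. V w xy) = 1"
  shows "CMI_W_Y_X K P V = (\<Sum>w<K. \<Sum>x\<in>UNIV. \<Sum>y\<in>UNIV.
     jWXY P V (w,(x,y)) * (log 2 (jWXY P V (w,(x,y))) + log 2 (mX P x) - log 2 (jWX P V (w,x)) - log 2 (P (x,y))))"
proof -
  let ?a = "\<lambda>w x y. jWXY P V (w,(x,y))"
  have h1: "H_WXY K P V = (\<Sum>w<K. \<Sum>x\<in>UNIV. \<Sum>y\<in>UNIV. - (?a w x y * log 2 (?a w x y)))"
    unfolding H_WXY_def by (simp add: ent_prod sum_pair eta_log)
  have h2: "H_WX K P V = (\<Sum>w<K. \<Sum>x\<in>UNIV. \<Sum>y\<in>UNIV. - (?a w x y * log 2 (jWX P V (w,x))))"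
    unfolding H_WX_def
    by (simp add: ent_prod eta_log jWX_def jWXY_def sum_distrib_right sum_negf)
  have h3: "H_XY P = (\<Sum>w<K. \<Sum>x\<in>UNIV. \<Sum>y\<in>UNIV. - (?a w x y * log 2 (P (x,y))))"
  proof -
    have "H_XY P = (\<Sum>x\<in>UNIV. \<Sum>y\<in>UNIV. \<Sum>w<K. - (?a w x y * log 2 (P (x,y))))"
      unfolding H_XY_def ent_def
      by (simp add: sum_pair eta_log jWXY_def sum_distrib_right[symmetric] sum_distrib_left[symmetric] V sum_negf)
    also have "\<dots> = (\<Sum>w<K. \<Sum>x\<in>UNIV. \<Sum>y\<in>UNIV. - (?a w x y * log 2 (P (x,y))))"
      by (rule swap3)
    finally show ?thesis .
  qed
  have h4: "H_X P = (\<Sum>w<K. \<Sum>x\<in>UNIV. \<Sum>y\<in>UNIV. - (?a w x y * log 2 (mX P x)))"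
  proof -
    have "H_X P = (\<Sum>x\<in>UNIV. \<Sum>y\<in>UNIV. \<Sum>w<K. - (?a w x y * log 2 (mX P x)))"
      unfolding H_X_def ent_def
      by (simp add: eta_log jWXY_def sum_distrib_right[symmetric] sum_distrib_left[symmetric] V sum_negf mX_def)
    also have "\<dots> = (\<Sum>w<K. \<Sum>x\<in>UNIV. \<Sum>y\<in>UNIV. - (?a w x y * log 2 (mX P x)))"
      by (rule swap3)
    finally show ?thesis .
  qed
  show ?thesis
    unfolding CMI_W_Y_X_def h1 h2 h3 h4
    by (simp add: distrib_left right_diff_distrib sum.distrib sum_subtractf sum_negf)
qed

lemma basic_facts:
  fixes P :: "'x::finite \<times> 'y::finite \<Rightarrow> real"
  assumes P: "\<And>xy. 0 \<le> P xy" and V: "cond_dist K V"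
  shows "P (x,y) \<le> mX P x"
    and "mX P x = 0 \<Longrightarrow> P (x,y) = 0"
    and "w < K \<Longrightarrow> V w xy \<le> 1"
    and "0 \<le> jWXY P V (w,(x,y))"
    and "jWXY P V (w,(x,y)) \<le> jWX P V (w,x)"
    and "w < K \<Longrightarrow> jWXY P V (w,(x,y)) \<le> P (x,y)"
    and "0 \<le> jWX P V (w,x)"
    and "0 \<le> mX P x"
    and "jWX P V (w,x) = (\<Sum>y\<in>UNIV. jWXY P V (w,(x,y)))"
proof -
  have Vn: "\<And>w xy. 0 \<le> V w xy" and Vs: "\<And>xy. (\<Sum>w<K. V w xy) = 1"
    using V by (auto simp: cond_dist_def)
  show 1: "P (x,y) \<le> mX P x"
    unfolding mX_def by (rule member_le_sum) (auto simp: P)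
  show "0 \<le> mX P x" unfolding mX_def by (auto intro: sum_nonneg simp: P)
  show "mX P x = 0 \<Longrightarrow> P (x,y) = 0" using 1 P[of "(x,y)"] by simp
  have V1: "V w' xy' \<le> 1" if "w' < K" for w' xy'
  proof -
    have "V w' xy' \<le> (\<Sum>w<K. V w xy')" using that by (intro member_le_sum) (auto simp: Vn)
    then show ?thesis using Vs by simp
  qed
  show "w < K \<Longrightarrow> V w xy \<le> 1" by (rule V1)
  show "0 \<le> jWXY P V (w,(x,y))" by (simp add: jWXY_def P Vn)
  show "jWX P V (w,x) = (\<Sum>y\<in>UNIV. jWXY P V (w,(x,y)))" by (simp add: jWX_def jWXY_def)
  then show "jWXY P V (w,(x,y)) \<le> jWX P V (w,x)"
    by (simp, intro member_le_sum) (auto simp: jWXY_def P Vn)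
  show "w < K \<Longrightarrow> jWXY P V (w,(x,y)) \<le> P (x,y)"
    using V1[of w "(x,y)"] P[of "(x,y)"] by (simp add: jWXY_def mult_left_le)
  show "0 \<le> jWX P V (w,x)" by (simp add: jWX_def P Vn sum_nonneg)
qed

lemma markov_CMI0:
  fixes P :: "'x::finite \<times> 'y::finite \<Rightarrow> real"
  assumes P: "\<And>xy. 0 \<le> P xy" and V: "cond_dist K V"
    and M: "\<And>w x y. w < K \<Longrightarrow> jWXY P V (w,(x,y)) = jWX P V (w,x) * P (x,y) / mX P x"
  shows "CMI_W_Y_X K P V = 0"
proof -
  have Vs: "\<And>xy. (\<Sum>w<K. V w xy) = 1" using V by (auto simp: cond_dist_def)
  have "\<And>w x y. w < K \<Longrightarrow> jWXY P V (w,(x,y)) * (log 2 (jWXY P V (w,(x,y))) + log 2 (mX P x)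
      - log 2 (jWX P V (w,x)) - log 2 (P (x,y))) = 0"
  proof -
    fix w x y assume w: "w < K"
    show "jWXY P V (w,(x,y)) * (log 2 (jWXY P V (w,(x,y))) + log 2 (mX P x)
      - log 2 (jWX P V (w,x)) - log 2 (P (x,y))) = 0"
    proof (cases "jWXY P V (w,(x,y)) = 0")
      case False
      have e: "jWXY P V (w,(x,y)) = jWX P V (w,x) * P (x,y) / mX P x" using M w .
      have j0: "0 \<le> jWX P V (w,x)" "0 \<le> mX P x" "0 \<le> P (x,y)"
        using basic_facts[where P=P and K=K and V=V, OF P V] P by auto
      have "jWX P V (w,x) \<noteq> 0" "P (x,y) \<noteq> 0" "mX P x \<noteq> 0" using False e by auto
      then have pos: "jWX P V (w,x) > 0" "P (x,y) > 0" "mX P x > 0" using j0 by auto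
      have "log 2 (jWXY P V (w,(x,y))) = log 2 (jWX P V (w,x)) + log 2 (P (x,y)) - log 2 (mX P x)"
        unfolding e using pos by (simp add: log_divide log_mult_pos)
      then show ?thesis by simp
    qed simp
  qed
  then show ?thesis
    unfolding CMI_formula[OF Vs] by (intro sum.neutral ballI) simp
qed

lemma CMI0_markov:
  fixes P :: "'x::finite \<times> 'y::finite \<Rightarrow> real"
  assumes P: "\<And>xy. 0 \<le> P xy" and V: "cond_dist K V"
    and C: "CMI_W_Y_X K P V = 0"
  shows "\<And>w x y. w < K \<Longrightarrow> jWXY P V (w,(x,y)) = jWX P V (w,x) * P (x,y) / mX P x"
proof -
  have Vs: "\<And>xy. (\<Sum>w<K. V w xy) = 1" using V by (auto simp: cond_dist_def)
  define a where "a w x y = jWXY P V (w,(x,y))" for w x y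
  define q where "q w x y = jWX P V (w,x) * P (x,y) / mX P x" for w x y
  define d where "d w x y = (if a w x y > 0 then a w x y * (ln (a w x y) - ln (q w x y)) - a w x y + q w x y
      else q w x y)" for w x y
  have a0: "0 \<le> a w x y" for w x y unfolding a_def using basic_facts[where P=P and K=K and V=V, OF P V] by auto
  have q0: "0 \<le> q w x y" for w x y unfolding q_def using basic_facts[where P=P and K=K and V=V, OF P V] P by auto
  have key: "jWXY P V (w,(x,y)) * (log 2 (jWXY P V (w,(x,y))) + log 2 (mX P x)
      - log 2 (jWX P V (w,x)) - log 2 (P (x,y))) * ln 2 = d w x y + a w x y - q w x y
      \<and> d w x y \<ge> 0 \<and> (d w x y = 0 \<longrightarrow> a w x y = q w x y)" if w: "w < K" for w x y
  proof (cases "a w x y > 0")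
    case True
    have "a w x y \<le> jWX P V (w,x)" "a w x y \<le> P (x,y)" "P (x,y) \<le> mX P x"
      unfolding a_def using basic_facts[where P=P and K=K and V=V, OF P V] w by auto
    then have pos: "jWX P V (w,x) > 0" "P (x,y) > 0" "mX P x > 0" using True by auto
    then have qpos: "q w x y > 0" unfolding q_def by simp
    have lq: "ln (q w x y) = ln (jWX P V (w,x)) + ln (P (x,y)) - ln (mX P x)"
      unfolding q_def using pos by (simp add: ln_div ln_mult)
    have t: "jWXY P V (w,(x,y)) * (log 2 (jWXY P V (w,(x,y))) + log 2 (mX P x)
      - log 2 (jWX P V (w,x)) - log 2 (P (x,y))) * ln 2 = a w x y * (ln (a w x y) - ln (q w x y))"
      unfolding lq a_def[symmetric] by (simp add: log_def field_simps)
    have le: "ln (q w x y / a w x y) \<le> q w x y / a w x y - 1"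
      using True qpos by (intro ln_le_minus_one) simp
    then have "a w x y * (ln (q w x y) - ln (a w x y)) \<le> q w x y - a w x y"
      using True qpos by (simp add: ln_div field_simps)
    then have dnn: "d w x y \<ge> 0" using True unfolding d_def by (simp add: algebra_simps)
    have "d w x y = 0 \<Longrightarrow> a w x y = q w x y"
    proof -
      assume "d w x y = 0"
      then have "a w x y * (ln (q w x y / a w x y) - (q w x y / a w x y - 1)) = 0"
        using True qpos unfolding d_def by (simp add: ln_div field_simps)
      then have "ln (q w x y / a w x y) = q w x y / a w x y - 1" using True by simp
      then have "q w x y / a w x y = 1" using True qpos by (intro ln_eq_minus_one) auto
      then show ?thesis using True by simp
    qed
    then show ?thesis using t dnn True unfolding d_def by simp
  next
    case False
    then have "a w x y = 0" using a0[of w x y] by simp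
    then show ?thesis using q0[of w x y] unfolding d_def by (simp add: a_def)
  qed
  have sa: "(\<Sum>y\<in>UNIV. a w x y) = jWX P V (w,x)" for w x
    unfolding a_def using basic_facts(9)[where P=P and K=K and V=V, OF P V] by simp
  have sq: "(\<Sum>y\<in>UNIV. q w x y) = jWX P V (w,x)" for w x
  proof (cases "mX P x = 0")
    case True
    then have "P (x,y) = 0" for y using basic_facts(1)[where P=P and K=K and V=V, OF P V, of x y] P[of "(x,y)"] by simp
    then show ?thesis by (simp add: q_def jWX_def)
  next
    case False
    have "(\<Sum>y\<in>UNIV. q w x y) = jWX P V (w,x) * (\<Sum>y\<in>UNIV. P (x,y)) / mX P x"
      unfolding q_def by (simp add: sum_divide_distrib[symmetric] sum_distrib_left)
    then show ?thesis using False by (simp add: mX_def)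
  qed
  have "0 = CMI_W_Y_X K P V * ln 2" using C by simp
  also have "\<dots> = (\<Sum>w<K. \<Sum>x\<in>UNIV. \<Sum>y\<in>UNIV. d w x y + a w x y - q w x y)"
    unfolding CMI_formula[OF Vs] sum_distrib_right using key by simp
  also have "\<dots> = (\<Sum>w<K. \<Sum>x\<in>UNIV. \<Sum>y\<in>UNIV. d w x y)"
    by (simp add: sum.distrib sum_subtractf sa sq)
  finally have S: "(\<Sum>w<K. \<Sum>x\<in>UNIV. \<Sum>y\<in>UNIV. d w x y) = 0" by simp
  have dn: "w < K \<Longrightarrow> d w x y \<ge> 0" for w x y using key by blast
  fix w x y assume w: "w < K"
  have "(\<Sum>x\<in>UNIV. \<Sum>y\<in>UNIV. d w x y) = 0"
    using S w dn by (subst (asm) sum_nonneg_eq_0_iff) (auto intro!: sum_nonneg)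
  then have "(\<Sum>y\<in>UNIV. d w x y) = 0"
    using w dn by (subst (asm) sum_nonneg_eq_0_iff) (auto intro!: sum_nonneg)
  then have "d w x y = 0"
    using w dn by (subst (asm) sum_nonneg_eq_0_iff) auto
  then have "a w x y = q w x y" using key[OF w] by blast
  then show "jWXY P V (w,(x,y)) = jWX P V (w,x) * P (x,y) / mX P x" by (simp add: a_def q_def)
qed

definition xonly :: "nat \<Rightarrow> (nat \<Rightarrow> 'x \<times> 'y \<Rightarrow> real) \<Rightarrow> bool" where
  "xonly K V \<longleftrightarrow> cond_dist K V \<and> (\<forall>w x y y'. V w (x,y) = V w (x,y'))"

definition fval :: "nat \<Rightarrow> real \<Rightarrow> ('x::finite \<times> 'y::finite \<Rightarrow> real) \<Rightarrow> (nat \<Rightarrow> 'x \<times> 'y \<Rightarrow> real) \<Rightarrow> real" where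
  "fval K mu P V = MI_W_XY K P V + mu * CH_Y_W K P V"

lemma xonly_CMI0:
  fixes P :: "'x::finite \<times> 'y::finite \<Rightarrow> real"
  assumes P: "\<And>xy. 0 \<le> P xy" and V: "xonly K V"
  shows "CMI_W_Y_X K P V = 0"
proof -
  have cd: "cond_dist K V" and xo: "\<And>w x y y'. V w (x,y) = V w (x,y')"
    using V by (auto simp: xonly_def)
  show ?thesis
  proof (rule markov_CMI0[OF P cd])
    fix w x y
    have "jWX P V (w,x) = (\<Sum>y'\<in>UNIV. P (x,y') * V w (x,y))"
      unfolding jWX_def by (intro sum.cong refl) (simp only: fst_conv snd_conv, metis xo)
    then have j: "jWX P V (w,x) = V w (x,y) * mX P x"
      unfolding mX_def by (simp add: sum_distrib_left mult.commute)
    show "jWXY P V (w,(x,y)) = jWX P V (w,x) * P (x,y) / mX P x"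
    proof (cases "mX P x = 0")
      case True
      then have "P (x,y) = 0" using basic_facts(1)[where P=P and K=K and V=V, OF P cd, of x y] P[of "(x,y)"] by simp
      then show ?thesis by (simp add: jWXY_def)
    qed (simp add: j jWXY_def)
  qed
qed

lemma H_cong:
  assumes "\<And>w xy. w < K \<Longrightarrow> jWXY P V (w,xy) = jWXY P V' (w,xy)"
  shows "H_W K P V = H_W K P V'" "H_WY K P V = H_WY K P V'" "H_WXY K P V = H_WXY K P V'"
proof -
  have jWe: "jW P U w = (\<Sum>xy\<in>UNIV. jWXY P U (w,xy))" for U w by (simp add: jW_def jWXY_def)
  have jWYe: "jWY P U (w,y) = (\<Sum>x\<in>UNIV. jWXY P U (w,(x,y)))" for U w y by (simp add: jWY_def jWXY_def)
  have "jW P V w = jW P V' w" if "w < K" for w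
    unfolding jWe using assms[OF that] by simp
  then show "H_W K P V = H_W K P V'" unfolding H_W_def ent_def by (intro sum.cong) auto
  have "jWY P V (w,y) = jWY P V' (w,y)" if "w < K" for w y
    unfolding jWYe using assms[OF that] by simp
  then show "H_WY K P V = H_WY K P V'" unfolding H_WY_def ent_def by (intro sum.cong) auto
  show "H_WXY K P V = H_WXY K P V'" unfolding H_WXY_def ent_def using assms by (intro sum.cong) auto
qed

lemma reduce:
  fixes P :: "'x::finite \<times> 'y::finite \<Rightarrow> real"
  assumes P: "\<And>xy. 0 \<le> P xy" and V: "cond_dist K V" and C: "CMI_W_Y_X K P V = 0" and K: "0 < K"
  shows "\<exists>V'. xonly K V' \<and> MI_W_XY K P V' = MI_W_XY K P V \<and> CH_Y_W K P V' = CH_Y_W K P V"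
proof -
  define V' :: "nat \<Rightarrow> 'x \<times> 'y \<Rightarrow> real" where "V' = (\<lambda>w xy. if mX P (fst xy) = 0 then (if w = 0 then 1 else 0)
      else jWX P V (w, fst xy) / mX P (fst xy))"
  have Vn: "\<And>w xy. 0 \<le> V w xy" and Vs: "\<And>xy. (\<Sum>w<K. V w xy) = 1"
    using V by (auto simp: cond_dist_def)
  have jsum: "(\<Sum>w<K. jWX P V (w,x)) = mX P x" for x
  proof -
    have "(\<Sum>w<K. jWX P V (w,x)) = (\<Sum>y\<in>UNIV. \<Sum>w<K. P (x,y) * V w (x,y))"
      unfolding jWX_def by (simp add: sum.swap[of _ "{..<K}"])
    also have "\<dots> = mX P x" by (simp add: sum_distrib_left[symmetric] Vs mX_def)
    finally show ?thesis .
  qed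
  have cd': "cond_dist K V'"
    unfolding cond_dist_def
  proof (intro conjI allI)
    fix w xy show "0 \<le> V' w xy"
      unfolding V'_def using basic_facts(7,8)[where P=P and K=K and V=V, OF P V] by auto
  next
    fix xy show "(\<Sum>w<K. V' w xy) = 1"
    proof (cases "mX P (fst xy) = 0")
      case True then show ?thesis using K by (simp add: V'_def)
    next
      case False
      then show ?thesis
        by (simp add: V'_def sum_divide_distrib[symmetric] jsum)
    qed
  qed
  have xo: "xonly K V'" using cd' unfolding xonly_def by (auto simp: V'_def)
  have M: "\<And>w x y. w < K \<Longrightarrow> jWXY P V (w,(x,y)) = jWX P V (w,x) * P (x,y) / mX P x"
    using CMI0_markov[OF P V C] by blast
  have eq: "jWXY P V (w,xy) = jWXY P V' (w,xy)" if w: "w < K" for w xy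
  proof -
    obtain x y where xy: "xy = (x,y)" by (cases xy)
    show ?thesis
    proof (cases "mX P x = 0")
      case True
      then have "P (x,y) = 0" using basic_facts(1)[where P=P and K=K and V=V, OF P V, of x y] P[of "(x,y)"] by simp
      then show ?thesis using M[OF w, of x y] by (simp add: xy jWXY_def)
    next
      case False
      then show ?thesis using M[OF w, of x y] by (simp add: xy jWXY_def V'_def)
    qed
  qed
  have "MI_W_XY K P V' = MI_W_XY K P V" "CH_Y_W K P V' = CH_Y_W K P V"
    using H_cong[of K P V V'] eq by (simp_all add: MI_W_XY_def CH_Y_W_def)
  then show ?thesis using xo by blast
qed

lemma eta_bounds:
  assumes "0 \<le> t" "t \<le> 1"
  shows "0 \<le> eta t" "eta t \<le> 1 / ln 2"
proof -
  have "0 \<le> - (t * ln t) \<and> - (t * ln t) \<le> 1"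
  proof (cases "t = 0")
    case False
    then have tp: "t > 0" using assms by simp
    have "ln t \<le> 0" using tp assms by simp
    then have a: "0 \<le> - (t * ln t)" using tp by (simp add: mult_nonneg_nonpos)
    have "ln (1/t) \<le> 1/t - 1" using tp by (intro ln_le_minus_one) simp
    then have "- ln t \<le> 1/t - 1" using tp by (simp add: ln_div)
    then have "t * (- ln t) \<le> t * (1/t - 1)" using tp by (intro mult_left_mono) auto
    moreover have "t * (1/t - 1) = 1 - t" using tp by (simp add: field_simps)
    ultimately have "- (t * ln t) \<le> 1 - t" by simp
    then show ?thesis using a assms by simp
  qed simp
  then have u: "0 \<le> - (t * ln t)" "- (t * ln t) \<le> 1" by auto
  have l2: "ln (2::real) > 0" by simp
  show "0 \<le> eta t" unfolding eta_alt by (rule divide_nonneg_pos[OF u(1) l2])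
  show "eta t \<le> 1 / ln 2" unfolding eta_alt by (rule divide_right_mono[OF u(2)]) (use l2 in simp)
qed

lemma ent_bounds:
  assumes "finite A" "\<And>a. a \<in> A \<Longrightarrow> 0 \<le> p a \<and> p a \<le> 1"
  shows "0 \<le> ent A p" "ent A p \<le> real (card A) * (1 / ln 2)"
proof -
  show "0 \<le> ent A p" unfolding ent_def using assms eta_bounds by (intro sum_nonneg) auto
  show "ent A p \<le> real (card A) * (1 / ln 2)" unfolding ent_def
    using assms eta_bounds by (intro sum_bounded_above) auto
qed

lemma ent_close:
  assumes "finite A" "\<And>a. a \<in> A \<Longrightarrow> 0 \<le> p a \<and> p a \<le> 1 \<and> 0 \<le> q a \<and> q a \<le> 1 \<and> \<bar>p a - q a\<bar> < d"
    and UC: "\<forall>s\<in>{0..1}. \<forall>t\<in>{0..1}. \<bar>s - t\<bar> < d \<longrightarrow> \<bar>eta s - eta t\<bar> < e"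
  shows "\<bar>ent A p - ent A q\<bar> \<le> real (card A) * e"
proof -
  have "\<bar>ent A p - ent A q\<bar> = \<bar>\<Sum>a\<in>A. eta (p a) - eta (q a)\<bar>"
    unfolding ent_def by (simp add: sum_subtractf)
  also have "\<dots> \<le> (\<Sum>a\<in>A. \<bar>eta (p a) - eta (q a)\<bar>)" by (rule sum_abs)
  also have "\<dots> \<le> real (card A) * e"
  proof (rule sum_bounded_above)
    fix a assume "a \<in> A"
    then show "\<bar>eta (p a) - eta (q a)\<bar> \<le> e" using assms(2)[of a] UC by (auto intro: less_imp_le)
  qed
  finally show ?thesis .
qed

lemma P_range:
  fixes P :: "'x::finite \<times> 'y::finite \<Rightarrow> real"
  assumes P: "is_dist P"
  shows "0 \<le> P xy \<and> P xy \<le> 1"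
proof -
  have Pn: "\<And>xy. 0 \<le> P xy" and Ps: "(\<Sum>xy\<in>UNIV. P xy) = 1" using P by (auto simp: is_dist_def)
  have "P xy \<le> (\<Sum>xy\<in>UNIV. P xy)" by (rule member_le_sum) (auto simp: Pn)
  then show ?thesis using Ps Pn by simp
qed

lemma P_diff:
  fixes P P' :: "'x::finite \<times> 'y::finite \<Rightarrow> real"
  shows "\<bar>P' xy - P xy\<bar> \<le> (\<Sum>xy\<in>UNIV. \<bar>P' xy - P xy\<bar>)"
  by (rule member_le_sum) auto

lemma ranges:
  fixes P :: "'x::finite \<times> 'y::finite \<Rightarrow> real"
  assumes P: "is_dist P" and V: "cond_dist K V" and w: "w < K"
  shows "0 \<le> P xy \<and> P xy \<le> 1"
    "0 \<le> jWXY P V (w,xy) \<and> jWXY P V (w,xy) \<le> 1"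
    "0 \<le> jW P V w \<and> jW P V w \<le> 1"
    "0 \<le> jWY P V (w,y) \<and> jWY P V (w,y) \<le> 1"
proof -
  have Pn: "\<And>xy. 0 \<le> P xy" and Ps: "(\<Sum>xy\<in>UNIV. P xy) = 1" using P by (auto simp: is_dist_def)
  have Vn: "\<And>w xy. 0 \<le> V w xy" using V by (auto simp: cond_dist_def)
  have V1: "V w xy' \<le> 1" for xy' using basic_facts(3)[where P=P and K=K and V=V, OF Pn V w] .
  have P1: "P xy' \<le> 1" for xy'
  proof -
    have "P xy' \<le> (\<Sum>xy\<in>UNIV. P xy)" by (rule member_le_sum) (auto simp: Pn)
    then show ?thesis using Ps by simp
  qed
  show "0 \<le> P xy \<and> P xy \<le> 1" using Pn P1 by auto
  have "jWXY P V (w,xy) \<le> P xy" using V1[of xy] Pn[of xy] by (simp add: jWXY_def mult_left_le)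
  then show "0 \<le> jWXY P V (w,xy) \<and> jWXY P V (w,xy) \<le> 1" using P1[of xy] Pn Vn by (simp add: jWXY_def)
  have "jW P V w \<le> (\<Sum>xy\<in>UNIV. P xy)" unfolding jW_def
    using V1 Pn by (intro sum_mono) (simp add: mult_left_le)
  then show "0 \<le> jW P V w \<and> jW P V w \<le> 1" using Ps Pn Vn by (auto simp: jW_def intro: sum_nonneg)
  have "jWY P V (w,y) \<le> (\<Sum>x\<in>UNIV. P (x,y))" unfolding jWY_def
    using V1 Pn by (intro sum_mono) (simp add: mult_left_le)
  also have "\<dots> \<le> (\<Sum>y'\<in>UNIV. \<Sum>x\<in>UNIV. P (x,y'))"
    by (rule member_le_sum) (auto intro: sum_nonneg simp: Pn)
  also have "\<dots> = (\<Sum>xy\<in>UNIV. P xy)" by (simp add: sum_pair sum.swap[of _ "UNIV::'y set"])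
  finally show "0 \<le> jWY P V (w,y) \<and> jWY P V (w,y) \<le> 1" using Ps Pn Vn by (auto simp: jWY_def intro: sum_nonneg)
qed

lemma diffs:
  fixes P P' :: "'x::finite \<times> 'y::finite \<Rightarrow> real"
  assumes P: "is_dist P" and V: "cond_dist K V" and w: "w < K"
  defines "D \<equiv> (\<Sum>xy\<in>UNIV. \<bar>P' xy - P xy\<bar>)"
  shows "\<bar>P' xy - P xy\<bar> \<le> D"
    "\<bar>jWXY P' V (w,xy) - jWXY P V (w,xy)\<bar> \<le> D"
    "\<bar>jW P' V w - jW P V w\<bar> \<le> D"
    "\<bar>jWY P' V (w,y) - jWY P V (w,y)\<bar> \<le> D"
proof -
  have Pn: "\<And>xy. 0 \<le> P xy" using P by (auto simp: is_dist_def)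
  have Vn: "\<And>w xy. 0 \<le> V w xy" using V by (auto simp: cond_dist_def)
  have V1: "V w xy' \<le> 1" for xy' using basic_facts(3)[where P=P and K=K and V=V, OF Pn V w] .
  have m: "\<bar>(P' xy' - P xy') * V w xy'\<bar> \<le> \<bar>P' xy' - P xy'\<bar>" for xy'
    using V1[of xy'] Vn[of w xy'] by (simp add: abs_mult mult_left_le)
  show 1: "\<bar>P' xy - P xy\<bar> \<le> D" unfolding D_def by (rule member_le_sum) auto
  show "\<bar>jWXY P' V (w,xy) - jWXY P V (w,xy)\<bar> \<le> D"
    using m[of xy] 1 by (simp add: jWXY_def left_diff_distrib)
  have "\<bar>jW P' V w - jW P V w\<bar> = \<bar>\<Sum>xy\<in>UNIV. (P' xy - P xy) * V w xy\<bar>"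
    by (simp add: jW_def sum_subtractf left_diff_distrib)
  also have "\<dots> \<le> (\<Sum>xy\<in>UNIV. \<bar>(P' xy - P xy) * V w xy\<bar>)" by (rule sum_abs)
  also have "\<dots> \<le> D" unfolding D_def by (intro sum_mono m)
  finally show "\<bar>jW P' V w - jW P V w\<bar> \<le> D" .
  have "\<bar>jWY P' V (w,y) - jWY P V (w,y)\<bar> = \<bar>\<Sum>x\<in>UNIV. (P' (x,y) - P (x,y)) * V w (x,y)\<bar>"
    by (simp add: jWY_def sum_subtractf left_diff_distrib)
  also have "\<dots> \<le> (\<Sum>x\<in>UNIV. \<bar>(P' (x,y) - P (x,y)) * V w (x,y)\<bar>)" by (rule sum_abs)
  also have "\<dots> \<le> (\<Sum>x\<in>UNIV. \<bar>P' (x,y) - P (x,y)\<bar>)" by (intro sum_mono m)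
  also have "\<dots> \<le> (\<Sum>y'\<in>UNIV. \<Sum>x\<in>UNIV. \<bar>P' (x,y') - P (x,y')\<bar>)"
    by (rule member_le_sum) (auto intro: sum_nonneg)
  also have "\<dots> = D" unfolding D_def by (simp add: sum_pair sum.swap[of _ "UNIV::'y set"])
  finally show "\<bar>jWY P' V (w,y) - jWY P V (w,y)\<bar> \<le> D" .
qed

lemma abs5: "(mu::real) \<ge> 0 \<Longrightarrow> \<bar>x + y - z + mu * (u - v)\<bar> \<le> \<bar>x\<bar> + \<bar>y\<bar> + \<bar>z\<bar> + mu * (\<bar>u\<bar> + \<bar>v\<bar>)"
proof -
  assume mu: "mu \<ge> 0"
  have "\<bar>mu * (u - v)\<bar> \<le> mu * (\<bar>u\<bar> + \<bar>v\<bar>)"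
    using mu by (simp add: abs_mult mult_left_mono abs_triangle_ineq4)
  moreover have "\<bar>x + y - z + m\<bar> \<le> \<bar>x\<bar> + \<bar>y\<bar> + \<bar>z\<bar> + \<bar>m\<bar>" for m :: real by arith
  ultimately show ?thesis by (meson add_left_mono order_trans)
qed

lemma f_close:
  fixes P P' :: "'x::finite \<times> 'y::finite \<Rightarrow> real"
  assumes P: "is_dist P" and P': "is_dist P'" and V: "cond_dist K V" and mu: "mu \<ge> 0"
    and D: "(\<Sum>xy\<in>UNIV. \<bar>P' xy - P xy\<bar>) < d"
    and UC: "\<forall>s\<in>{0..1}. \<forall>t\<in>{0..1}. \<bar>s - t\<bar> < d \<longrightarrow> \<bar>eta s - eta t\<bar> < e"
  shows "\<bar>fval K mu P' V - fval K mu P V\<bar> \<le> e * (real (card {..<K}) + real (card (UNIV :: ('x \<times> 'y) set))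
     + real (card ({..<K} \<times> (UNIV :: ('x \<times> 'y) set))) + mu * (real (card ({..<K} \<times> (UNIV :: 'y set))) + real (card {..<K})))"
proof -
  have a: "\<bar>H_W K P' V - H_W K P V\<bar> \<le> real (card {..<K}) * e"
    unfolding H_W_def
  proof (rule ent_close[OF _ _ UC])
    fix a assume "a \<in> {..<K}"
    then have w: "a < K" by simp
    show "0 \<le> jW P' V a \<and> jW P' V a \<le> 1 \<and> 0 \<le> jW P V a \<and> jW P V a \<le> 1 \<and> \<bar>jW P' V a - jW P V a\<bar> < d"
      using ranges(3)[OF P' V w] ranges(3)[OF P V w] diffs(3)[OF P V w, of P'] D by auto
  qed simp
  have b: "\<bar>H_XY P' - H_XY P\<bar> \<le> real (card (UNIV :: ('x \<times> 'y) set)) * e"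
    unfolding H_XY_def
  proof (rule ent_close[OF _ _ UC])
    fix a :: "'x \<times> 'y"
    show "0 \<le> P' a \<and> P' a \<le> 1 \<and> 0 \<le> P a \<and> P a \<le> 1 \<and> \<bar>P' a - P a\<bar> < d"
      using P_range[OF P', of a] P_range[OF P, of a] P_diff[of P' a P] D by auto
  qed simp
  have c: "\<bar>H_WXY K P' V - H_WXY K P V\<bar> \<le> real (card ({..<K} \<times> (UNIV :: ('x \<times> 'y) set))) * e"
    unfolding H_WXY_def
  proof (rule ent_close[OF _ _ UC])
    fix a assume "a \<in> {..<K} \<times> (UNIV :: ('x \<times> 'y) set)"
    then obtain w xy where aw: "a = (w,xy)" and w: "w < K" by auto
    show "0 \<le> jWXY P' V a \<and> jWXY P' V a \<le> 1 \<and> 0 \<le> jWXY P V a \<and> jWXY P V a \<le> 1 \<and> \<bar>jWXY P' V a - jWXY P V a\<bar> < d"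
      unfolding aw using ranges(2)[OF P' V w, of xy] ranges(2)[OF P V w, of xy] diffs(2)[OF P V w, of P' xy] D by auto
  qed simp
  have dd: "\<bar>H_WY K P' V - H_WY K P V\<bar> \<le> real (card ({..<K} \<times> (UNIV :: 'y set))) * e"
    unfolding H_WY_def
  proof (rule ent_close[OF _ _ UC])
    fix a assume "a \<in> {..<K} \<times> (UNIV :: 'y set)"
    then obtain w y where aw: "a = (w,y)" and w: "w < K" by auto
    show "0 \<le> jWY P' V a \<and> jWY P' V a \<le> 1 \<and> 0 \<le> jWY P V a \<and> jWY P V a \<le> 1 \<and> \<bar>jWY P' V a - jWY P V a\<bar> < d"
      unfolding aw using ranges(4)[OF P' V w, of y] ranges(4)[OF P V w, of y] diffs(4)[OF P V w, of P' y] D by auto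
  qed simp
  have eq: "fval K mu P' V - fval K mu P V = (H_W K P' V - H_W K P V) + (H_XY P' - H_XY P)
     - (H_WXY K P' V - H_WXY K P V) + mu * ((H_WY K P' V - H_WY K P V) - (H_W K P' V - H_W K P V))"
    unfolding fval_def MI_W_XY_def CH_Y_W_def by (simp add: algebra_simps)
  have "\<bar>fval K mu P' V - fval K mu P V\<bar> \<le> real (card {..<K}) * e + real (card (UNIV :: ('x \<times> 'y) set)) * e
     + real (card ({..<K} \<times> (UNIV :: ('x \<times> 'y) set))) * e + mu * (real (card ({..<K} \<times> (UNIV :: 'y set))) * e + real (card {..<K}) * e)"
    unfolding eq
    by (rule order_trans[OF abs5[OF mu]]) (intro add_mono mult_left_mono a b c dd mu)
  then show ?thesis by (simp add: algebra_simps)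
qed

lemma fval_lower:
  fixes P :: "'x::finite \<times> 'y::finite \<Rightarrow> real"
  assumes P: "is_dist P" and V: "cond_dist K V" and mu: "mu \<ge> 0"
  shows "fval K mu P V \<ge> - (real (card ({..<K} \<times> (UNIV :: ('x \<times> 'y) set))) * (1 / ln 2)
           + mu * (real (card {..<K}) * (1 / ln 2)))"
proof -
  have hw: "0 \<le> H_W K P V" "H_W K P V \<le> real (card {..<K}) * (1 / ln 2)"
    unfolding H_W_def using ranges(3)[OF P V] by (intro ent_bounds; auto)+
  have hxy: "0 \<le> H_XY P" unfolding H_XY_def using P_range[OF P] by (intro ent_bounds) auto
  have hwy: "0 \<le> H_WY K P V" unfolding H_WY_def using ranges(4)[OF P V] by (intro ent_bounds) auto
  have hwxy: "H_WXY K P V \<le> real (card ({..<K} \<times> (UNIV :: ('x \<times> 'y) set))) * (1 / ln 2)"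
    unfolding H_WXY_def using ranges(2)[OF P V] by (intro ent_bounds) auto
  have "mu * H_W K P V \<le> mu * (real (card {..<K}) * (1 / ln 2))" using hw mu by (intro mult_left_mono) auto
  moreover have "0 \<le> mu * H_WY K P V" using hwy mu by simp
  ultimately show ?thesis using hw hxy hwxy
    unfolding fval_def MI_W_XY_def CH_Y_W_def by (simp add: algebra_simps)
qed

lemma R_eq:
  fixes P :: "'x::finite \<times> 'y::finite \<Rightarrow> real"
  assumes P: "is_dist P" and mu: "mu \<ge> 0"
  shows "R_mu mu P = Inf ((\<lambda>V. fval (wak_card TYPE('x \<times> 'y)) mu P V) ` {V. xonly (wak_card TYPE('x \<times> 'y)) V})"
proof -
  let ?K = "wak_card TYPE('x \<times> 'y)"
  let ?F = "(\<lambda>V. fval ?K mu P V) ` {V. xonly ?K V}"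
  let ?S = "{r0 + mu * r2 | r0 r2. (r0, r2) \<in> WAK_region P}"
  define B where "B = - (real (card ({..<?K} \<times> (UNIV :: ('x \<times> 'y) set))) * (1 / ln 2)
           + mu * (real (card {..<?K}) * (1 / ln 2)))"
  have Kp: "0 < ?K" by (simp add: wak_card_def)
  have Pn: "\<And>xy. 0 \<le> P xy" using P by (auto simp: is_dist_def)
  define V0 :: "nat \<Rightarrow> 'x \<times> 'y \<Rightarrow> real" where "V0 = (\<lambda>w xy. if w = 0 then 1 else 0)"
  have "xonly ?K V0" using Kp by (simp add: xonly_def cond_dist_def V0_def)
  then have "fval ?K mu P V0 \<in> ?F" by simp
  then have Fne: "?F \<noteq> {}" by (metis empty_iff)
  have Flow: "\<And>f. f \<in> ?F \<Longrightarrow> B \<le> f"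
    using fval_lower[OF P _ mu] unfolding B_def xonly_def by auto
  then have Fbdd: "bdd_below ?F" by (auto simp: bdd_below_def)
  have FS: "?F \<subseteq> ?S"
  proof
    fix f assume "f \<in> ?F"
    then obtain V where V: "xonly ?K V" and f: "f = fval ?K mu P V" by auto
    have "(MI_W_XY ?K P V, CH_Y_W ?K P V) \<in> WAK_region P"
      unfolding WAK_region_def using V xonly_CMI0[OF Pn V] by (auto simp: xonly_def)
    then show "f \<in> ?S" unfolding f fval_def by blast
  qed
  have SF: "\<exists>f\<in>?F. f \<le> s" if "s \<in> ?S" for s
  proof -
    obtain r0 r2 V where s: "s = r0 + mu * r2" and V: "cond_dist ?K V"
      and r0: "r0 \<ge> MI_W_XY ?K P V" and r2: "r2 \<ge> CH_Y_W ?K P V" and C: "CMI_W_Y_X ?K P V = 0"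
      using \<open>s \<in> ?S\<close> unfolding WAK_region_def by auto
    obtain V' where V': "xonly ?K V'" "MI_W_XY ?K P V' = MI_W_XY ?K P V" "CH_Y_W ?K P V' = CH_Y_W ?K P V"
      using reduce[OF Pn V C Kp] by blast
    have "fval ?K mu P V' \<le> s" unfolding fval_def s V'(2,3)
      using r0 mult_left_mono[OF r2 mu] by simp
    then show ?thesis using V'(1) by blast
  qed
  have Sbdd: "bdd_below ?S"
    unfolding bdd_below_def using SF Flow by (meson order_trans)
  have "Inf ?S \<le> Inf ?F" by (rule cInf_superset_mono[OF Fne Sbdd FS])
  moreover have "Inf ?F \<le> Inf ?S"
  proof (rule cInf_greatest)
    show "?S \<noteq> {}" using FS Fne by blast
    fix s assume "s \<in> ?S"
    then obtain f where "f \<in> ?F" "f \<le> s" using SF by blast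
    then show "Inf ?F \<le> s" using cInf_lower[OF _ Fbdd] by (meson order_trans)
  qed
  ultimately show ?thesis unfolding R_mu_def by simp
qed

lemma Inf_close:
  fixes f g :: "'a \<Rightarrow> real"
  assumes ne: "A \<noteq> {}" and bf: "bdd_below (f ` A)" and bg: "bdd_below (g ` A)"
    and c: "\<And>a. a \<in> A \<Longrightarrow> \<bar>f a - g a\<bar> \<le> c"
  shows "\<bar>Inf (f ` A) - Inf (g ` A)\<bar> \<le> c"
proof -
  have "Inf (f ` A) - c \<le> Inf (g ` A)"
  proof -
    have "Inf (f ` A) \<le> Inf (g ` A) + c"
    proof -
      have "Inf (f ` A) - c \<le> g a" if "a \<in> A" for a
        using cInf_lower[OF imageI[OF that] bf] c[OF that] by linarith
      then have "Inf (f ` A) - c \<le> Inf (g ` A)" using ne by (intro cInf_greatest) auto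
      then show ?thesis by simp
    qed
    then show ?thesis by simp
  qed
  moreover have "Inf (g ` A) - c \<le> Inf (f ` A)"
  proof -
    have "Inf (g ` A) - c \<le> f a" if "a \<in> A" for a
      using cInf_lower[OF imageI[OF that] bg] c[OF that] by linarith
    then show ?thesis using ne by (intro cInf_greatest) auto
  qed
  ultimately show ?thesis by linarith
qed

theorem lemma4:
  fixes mu :: real
  assumes "mu \<ge> 0"
  shows "\<forall>P :: 'x::finite \<times> 'y::finite \<Rightarrow> real. is_dist P \<longrightarrow>
           (\<forall>e>0. \<exists>d>0. \<forall>P'. is_dist P' \<and> (\<Sum>a\<in>UNIV. \<bar>P' a - P a\<bar>) < d \<longrightarrow>
              \<bar>R_mu mu P' - R_mu mu P\<bar> < e)"
proof (intro allI impI)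
  fix P :: "'x::finite \<times> 'y::finite \<Rightarrow> real" and e :: real
  assume P: "is_dist P" and e: "e > 0"
  let ?K = "wak_card TYPE('x \<times> 'y)"
  define c where "c = real (card {..<?K}) + real (card (UNIV :: ('x \<times> 'y) set))
     + real (card ({..<?K} \<times> (UNIV :: ('x \<times> 'y) set))) + mu * (real (card ({..<?K} \<times> (UNIV :: 'y set))) + real (card {..<?K}))"
  have c0: "c \<ge> 0" unfolding c_def using assms by simp
  define e' where "e' = e / (2 * (c + 1))"
  have e': "e' > 0" unfolding e'_def using e c0 by simp
  have ce: "e' * c < e"
  proof -
    have "e' * c \<le> e' * (c + 1)" using e' by simp
    also have "\<dots> = e / 2" unfolding e'_def using c0 by (simp add: field_simps)
    finally show ?thesis using e by simp
  qed
  obtain d where d: "d > 0" and UC: "\<forall>s\<in>{0..1}. \<forall>t\<in>{0..1}. \<bar>s - t\<bar> < d \<longrightarrow> \<bar>eta s - eta t\<bar> < e'"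
    using eta_uc'[OF e'] by blast
  show "\<exists>d>0. \<forall>P'. is_dist P' \<and> (\<Sum>a\<in>UNIV. \<bar>P' a - P a\<bar>) < d \<longrightarrow> \<bar>R_mu mu P' - R_mu mu P\<bar> < e"
  proof (intro exI[of _ d] conjI allI impI d)
    fix P' :: "'x \<times> 'y \<Rightarrow> real"
    assume "is_dist P' \<and> (\<Sum>a\<in>UNIV. \<bar>P' a - P a\<bar>) < d"
    then have P': "is_dist P'" and D: "(\<Sum>a\<in>UNIV. \<bar>P' a - P a\<bar>) < d" by auto
    have Kp: "0 < ?K" by (simp add: wak_card_def)
    define V0 :: "nat \<Rightarrow> 'x \<times> 'y \<Rightarrow> real" where "V0 = (\<lambda>w xy. if w = 0 then 1 else 0)"
    have "xonly ?K V0" using Kp by (simp add: xonly_def cond_dist_def V0_def)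
    then have "V0 \<in> {V. xonly ?K V}" by simp
    then have ne: "{V :: nat \<Rightarrow> 'x \<times> 'y \<Rightarrow> real. xonly ?K V} \<noteq> {}" by (metis empty_iff)
    have bdd: "bdd_below ((\<lambda>V. fval ?K mu Q V) ` {V. xonly ?K V})" if "is_dist Q" for Q :: "'x \<times> 'y \<Rightarrow> real"
      using fval_lower[OF that _ assms] unfolding bdd_below_def xonly_def by blast
    have "\<bar>R_mu mu P' - R_mu mu P\<bar> \<le> e' * c"
      unfolding R_eq[OF P' assms] R_eq[OF P assms]
    proof (rule Inf_close[OF ne bdd[OF P'] bdd[OF P]])
      fix V :: "nat \<Rightarrow> 'x \<times> 'y \<Rightarrow> real" assume "V \<in> {V. xonly ?K V}"
      then have V: "cond_dist ?K V" by (simp add: xonly_def)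
      show "\<bar>fval ?K mu P' V - fval ?K mu P V\<bar> \<le> e' * c"
        unfolding c_def using f_close[OF P P' V assms D UC] .
    qed
    then show "\<bar>R_mu mu P' - R_mu mu P\<bar> < e" using ce by simp
  qed
qed

end
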